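(* Let $\mathcal H_1,\dots,\mathcal H_7,\mathcal H_E$ be finite-dimensional complex Hilbert spaces and $|\psi\rangle\in\mathcal H_1\otimes\cdots\otimes\mathcal H_7\otimes\mathcal H_E$. For each $k\in[7]$ let $X_k,Z_k$ be Hermitian operators on $\mathcal H_k$ (extended by the identity to the whole space). Define $\tilde S_1=X_4X_5X_6X_7$, $\tilde S_2=X_2X_3X_6X_7$, $\tilde S_3=X_1X_3X_5X_7$, $\tilde S_4=X_1X_2X_5X_6$, $\tilde S_5=Z_4Z_5Z_6Z_7$, $\tilde S_6=Z_2Z_3Z_6Z_7$, $\tilde S_7=Z_1Z_3Z_5Z_7$, $\tilde S_8=Z_1Z_2Z_5Z_6$. Assume (i) $X_kZ_k+Z_kX_k=0$ for $k\in\{2,3,5,7\}$; (ii) $\tilde S_k|\psi\rangle=|\psi\rangle$ for all $k\in[8]$; (iii) $X_k^2=Z_k^2=I$ for $k\in\{1,4,6\}$. Then for every $k\in[7]$: $X_k^2|\psi\rangle=Z_k^2|\psi\rangle=|\psi\rangle$ and $(X_kZ_k+Z_kX_k)|\psi\rangle=0$.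
   Context: Operators acting on different tensor factors commute. *)

theory Defs
  imports Complex_Main
begin

text \<open>Model: a finite-dimensional complex Hilbert space H is C^I for a finite index type I
(orthonormal basis indexed by I).
The global space H1 x ... x H7 x HE is C^(I1 x ... x I7 x IE); an operator acting on
factor k is extended by the identity on the other factors via a get/put pair
selecting the k-th coordinate of a basis index.\<close>

type_synonym 'a cmat = "'a \<Rightarrow> 'a \<Rightarrow> complex"

definition mmult :: "'a::finite cmat \<Rightarrow> 'a cmat \<Rightarrow> 'a cmat" where
  "mmult A B = (\<lambda>i j. \<Sum>k\<in>UNIV. A i k * B k j)"

definition mid :: "'a cmat" where
  "mid = (\<lambda>i j. if i = j then 1 else 0)"

definition hermitian :: "'a cmat \<Rightarrow> bool" where
  "hermitian A \<longleftrightarrow> (\<forall>i j. A i j = cnj (A j i))"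

definition anticommute :: "'a::finite cmat \<Rightarrow> 'a cmat \<Rightarrow> bool" where
  "anticommute A B \<longleftrightarrow> (\<forall>i j. mmult A B i j + mmult B A i j = 0)"

definition lift :: "('i \<Rightarrow> 'a) \<Rightarrow> ('a \<Rightarrow> 'i \<Rightarrow> 'i) \<Rightarrow> 'a::finite cmat
                    \<Rightarrow> ('i \<Rightarrow> complex) \<Rightarrow> ('i \<Rightarrow> complex)" where
  "lift get put A v = (\<lambda>x. \<Sum>b\<in>UNIV. A (get x) b * v (put b x))"

definition get1 where "get1 = (\<lambda>(x1,r). x1)"
definition put1 where "put1 b = (\<lambda>(x1,r). (b,r))"
definition get2 where "get2 = (\<lambda>(x1,x2,r). x2)"
definition put2 where "put2 b = (\<lambda>(x1,x2,r). (x1,b,r))"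
definition get3 where "get3 = (\<lambda>(x1,x2,x3,r). x3)"
definition put3 where "put3 b = (\<lambda>(x1,x2,x3,r). (x1,x2,b,r))"
definition get4 where "get4 = (\<lambda>(x1,x2,x3,x4,r). x4)"
definition put4 where "put4 b = (\<lambda>(x1,x2,x3,x4,r). (x1,x2,x3,b,r))"
definition get5 where "get5 = (\<lambda>(x1,x2,x3,x4,x5,r). x5)"
definition put5 where "put5 b = (\<lambda>(x1,x2,x3,x4,x5,r). (x1,x2,x3,x4,b,r))"
definition get6 where "get6 = (\<lambda>(x1,x2,x3,x4,x5,x6,r). x6)"
definition put6 where "put6 b = (\<lambda>(x1,x2,x3,x4,x5,x6,r). (x1,x2,x3,x4,x5,b,r))"
definition get7 where "get7 = (\<lambda>(x1,x2,x3,x4,x5,x6,x7,r). x7)"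
definition put7 where "put7 b = (\<lambda>(x1,x2,x3,x4,x5,x6,x7,r). (x1,x2,x3,x4,x5,x6,b,r))"

definition concl_at :: "('i \<Rightarrow> 'a) \<Rightarrow> ('a \<Rightarrow> 'i \<Rightarrow> 'i) \<Rightarrow> 'a::finite cmat \<Rightarrow> 'a cmat
                        \<Rightarrow> ('i \<Rightarrow> complex) \<Rightarrow> bool" where
  "concl_at get put X Z psi \<longleftrightarrow>
     lift get put X (lift get put X psi) = psi \<and>
     lift get put Z (lift get put Z psi) = psi \<and>
     (\<lambda>i. lift get put X (lift get put Z psi) i + lift get put Z (lift get put X psi) i) = (\<lambda>i. 0)"

end

theory Submission
  imports Defs
begin


definition factor :: "('i \<Rightarrow> 'a) \<Rightarrow> ('a \<Rightarrow> 'i \<Rightarrow> 'i) \<Rightarrow> bool" where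
  "factor g p \<longleftrightarrow> (\<forall>b x. g (p b x) = b) \<and> (\<forall>x. p (g x) x = x) \<and> (\<forall>b c x. p b (p c x) = p b x)"

definition indep :: "('i \<Rightarrow> 'a) \<Rightarrow> ('a \<Rightarrow> 'i \<Rightarrow> 'i) \<Rightarrow> ('i \<Rightarrow> 'b) \<Rightarrow> ('b \<Rightarrow> 'i \<Rightarrow> 'i) \<Rightarrow> bool" where
  "indep g1 p1 g2 p2 \<longleftrightarrow> (\<forall>a x. g2 (p1 a x) = g2 x) \<and> (\<forall>b x. g1 (p2 b x) = g1 x) \<and> (\<forall>a b x. p2 b (p1 a x) = p1 a (p2 b x))"

lemma lift_comm:
  fixes A :: "'a::finite cmat" and B :: "'b::finite cmat"
  assumes "indep g1 p1 g2 p2"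
  shows "lift g2 p2 B (lift g1 p1 A v) = lift g1 p1 A (lift g2 p2 B v)"
proof
  fix x
  have "lift g2 p2 B (lift g1 p1 A v) x = (\<Sum>b\<in>UNIV. \<Sum>a\<in>UNIV. B (g2 x) b * (A (g1 x) a * v (p1 a (p2 b x))))"
    using assms unfolding lift_def indep_def by (simp add: sum_distrib_left)
  also have "\<dots> = (\<Sum>a\<in>UNIV. \<Sum>b\<in>UNIV. A (g1 x) a * (B (g2 x) b * v (p2 b (p1 a x))))"
    using assms unfolding indep_def by (subst sum.swap) (simp add: algebra_simps)
  also have "\<dots> = lift g1 p1 A (lift g2 p2 B v) x"
    using assms unfolding lift_def indep_def by (simp add: sum_distrib_left)
  finally show "lift g2 p2 B (lift g1 p1 A v) x = lift g1 p1 A (lift g2 p2 B v) x" .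
qed

lemma lift_merge:
  fixes A B :: "'a::finite cmat"
  assumes "factor g p"
  shows "lift g p A (lift g p B v) = lift g p (mmult A B) v"
proof
  fix x
  have "lift g p A (lift g p B v) x = (\<Sum>a\<in>UNIV. \<Sum>b\<in>UNIV. A (g x) a * (B a b * v (p b x)))"
    using assms unfolding lift_def factor_def by (simp add: sum_distrib_left)
  also have "\<dots> = (\<Sum>b\<in>UNIV. \<Sum>a\<in>UNIV. A (g x) a * B a b * v (p b x))"
    by (subst sum.swap) (simp add: algebra_simps)
  also have "\<dots> = lift g p (mmult A B) v x"
    unfolding lift_def mmult_def by (simp add: sum_distrib_right)
  finally show "lift g p A (lift g p B v) x = lift g p (mmult A B) v x" .
qed

lemma lift_mid:
  assumes "factor g p"
  shows "lift g p (mid::'a::finite cmat) v = v"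
proof
  fix x
  have "lift g p (mid::'a cmat) v x = (\<Sum>b\<in>UNIV. if b = g x then v (p b x) else 0)"
    unfolding lift_def mid_def by (rule sum.cong) auto
  also have "\<dots> = v x" using assms unfolding factor_def by simp
  finally show "lift g p (mid::'a cmat) v x = v x" .
qed

lemma lift_neg_mat: "lift g p (\<lambda>i j. - (M::'a::finite cmat) i j) v = (\<lambda>x. - lift g p M v x)"
  unfolding lift_def by (simp add: sum_negf)

lemma lift_neg_vec: "lift g p (M::'a::finite cmat) (\<lambda>x. - v x) = (\<lambda>x. - lift g p M v x)"
  unfolding lift_def by (simp add: sum_negf)

lemma lift_add_vec: "lift g p (M::'a::finite cmat) (\<lambda>x. u x + v x) = (\<lambda>x. lift g p M u x + lift g p M v x)"
  unfolding lift_def by (simp add: sum.distrib algebra_simps)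

lemma lift_diff_vec: "lift g p (M::'a::finite cmat) (\<lambda>x. u x - v x) = (\<lambda>x. lift g p M u x - lift g p M v x)"
  unfolding lift_def by (simp add: sum_subtractf algebra_simps)

lemma lift_add_mat: "lift g p (A::'a::finite cmat) v x + lift g p B v x = lift g p (\<lambda>i j. A i j + B i j) v x"
  unfolding lift_def by (simp add: sum.distrib algebra_simps)

lemma lift_zero_mat: "lift g p (\<lambda>i j. 0::complex) (v::'i \<Rightarrow> complex) = (\<lambda>x. 0)"
  unfolding lift_def by simp

lemma lift_zero_vec: "lift g p (M::'a::finite cmat) (\<lambda>x::'i. 0) = (\<lambda>x. 0)"
  unfolding lift_def by simp

lemma lift_herm:
  fixes A :: "'a::finite cmat" and u v :: "'i::finite \<Rightarrow> complex"
  assumes f: "factor g p" and h: "hermitian A"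
  shows "(\<Sum>x\<in>UNIV. cnj (u x) * lift g p A v x) = (\<Sum>x\<in>UNIV. cnj (lift g p A u x) * v x)"
proof -
  have f1: "\<And>b x. g (p b x) = b" and f2: "\<And>x. p (g x) x = x" and f3: "\<And>b c x. p b (p c x) = p b x"
    using f unfolding factor_def by auto
  have h1: "\<And>i j. A i j = cnj (A j i)" using h unfolding hermitian_def by blast
  have "(\<Sum>x\<in>UNIV. cnj (u x) * lift g p A v x) = (\<Sum>x\<in>UNIV. \<Sum>b\<in>UNIV. cnj (u x) * A (g x) b * v (p b x))"
    unfolding lift_def by (simp only: sum_distrib_left mult.assoc)
  also have "\<dots> = (\<Sum>(x,b)\<in>UNIV \<times> UNIV. cnj (u x) * A (g x) b * v (p b x))"
    by (rule sum.cartesian_product)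
  also have "\<dots> = (\<Sum>(y,c)\<in>UNIV \<times> UNIV. cnj (u (p c y)) * A c (g y) * v y)"
    by (rule sum.reindex_bij_witness[where i="\<lambda>(y,c). (p c y, g y)" and j="\<lambda>(y,c). (p c y, g y)"])
       (auto simp: f1 f2 f3)
  also have "\<dots> = (\<Sum>y\<in>UNIV. \<Sum>c\<in>UNIV. cnj (u (p c y)) * A c (g y) * v y)"
    by (rule sum.cartesian_product[symmetric])
  also have "\<dots> = (\<Sum>y\<in>UNIV. \<Sum>c\<in>UNIV. cnj (A (g y) c * u (p c y)) * v y)"
    by (intro sum.cong refl) (metis h1 complex_cnj_mult mult.commute)
  also have "\<dots> = (\<Sum>y\<in>UNIV. cnj (lift g p A u y) * v y)"
    unfolding lift_def by (simp only: cnj_sum sum_distrib_right)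
  finally show ?thesis .
qed

lemma norm_sum: "(\<Sum>x\<in>UNIV. cnj (w x) * w x) = complex_of_real (\<Sum>x\<in>UNIV. (cmod (w x))\<^sup>2)"
  unfolding of_real_sum by (intro sum.cong refl) (metis complex_norm_square mult.commute)

lemma mmult_assoc: "mmult (mmult A B) C = mmult A (mmult B (C::'a::finite cmat))"
proof (intro ext)
  fix i j
  have "mmult (mmult A B) C i j = (\<Sum>k\<in>UNIV. \<Sum>l\<in>UNIV. A i l * B l k * C k j)"
    unfolding mmult_def by (simp add: sum_distrib_right)
  also have "\<dots> = (\<Sum>l\<in>UNIV. \<Sum>k\<in>UNIV. A i l * (B l k * C k j))"
    by (subst sum.swap) (simp add: mult.assoc)
  also have "\<dots> = mmult A (mmult B C) i j"
    unfolding mmult_def by (simp add: sum_distrib_left)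
  finally show "mmult (mmult A B) C i j = mmult A (mmult B C) i j" .
qed

lemma pos_lemma:
  fixes X :: "'a::finite cmat" and v :: "'i::finite \<Rightarrow> complex"
  assumes f: "factor g p" and h: "hermitian X"
    and e: "lift g p (mmult (mmult X X) (mmult X X)) v = v"
  shows "lift g p (mmult X X) v = v"
proof -
  define u where "u = (\<lambda>x. lift g p (mmult X X) v x - v x)"
  have "lift g p X (lift g p X u) = (\<lambda>x. lift g p (mmult (mmult X X) (mmult X X)) v x - lift g p (mmult X X) v x)"
    unfolding u_def lift_diff_vec by (simp add: lift_merge[OF f] mmult_assoc)
  hence e2: "\<And>x. lift g p X (lift g p X u) x + u x = 0" using e unfolding u_def by simp
  have "0 = (\<Sum>x\<in>UNIV. cnj (u x) * (lift g p X (lift g p X u) x + u x))" using e2 by simp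
  also have "\<dots> = (\<Sum>x\<in>UNIV. cnj (u x) * lift g p X (lift g p X u) x) + (\<Sum>x\<in>UNIV. cnj (u x) * u x)"
    by (simp add: algebra_simps sum.distrib)
  also have "\<dots> = (\<Sum>x\<in>UNIV. cnj (lift g p X u x) * lift g p X u x) + (\<Sum>x\<in>UNIV. cnj (u x) * u x)"
    using lift_herm[OF f h, of u "lift g p X u"] by (simp only:)
  also have "\<dots> = complex_of_real ((\<Sum>x\<in>UNIV. (cmod (lift g p X u x))\<^sup>2) + (\<Sum>x\<in>UNIV. (cmod (u x))\<^sup>2))"
    by (simp add: norm_sum)
  finally have "(\<Sum>x\<in>UNIV. (cmod (lift g p X u x))\<^sup>2) + (\<Sum>x\<in>UNIV. (cmod (u x))\<^sup>2) = 0"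
    using of_real_eq_0_iff by metis
  moreover have "(\<Sum>x\<in>UNIV. (cmod (lift g p X u x))\<^sup>2) \<ge> 0" "(\<Sum>x\<in>UNIV. (cmod (u x))\<^sup>2) \<ge> 0"
    by (auto intro: sum_nonneg)
  ultimately have "(\<Sum>x\<in>UNIV. (cmod (u x))\<^sup>2) = 0" by linarith
  hence "\<forall>x. (cmod (u x))\<^sup>2 = 0" by (subst (asm) sum_nonneg_eq_0_iff) auto
  hence "\<And>x. u x = 0" by simp
  thus ?thesis unfolding u_def by (auto simp: fun_eq_iff)
qed


lemma factor1: "factor get1 put1" unfolding factor_def get1_def put1_def by (simp add: split_paired_all)
lemma factor2: "factor get2 put2" unfolding factor_def get2_def put2_def by (simp add: split_paired_all)
lemma factor3: "factor get3 put3" unfolding factor_def get3_def put3_def by (simp add: split_paired_all)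
lemma factor4: "factor get4 put4" unfolding factor_def get4_def put4_def by (simp add: split_paired_all)
lemma factor5: "factor get5 put5" unfolding factor_def get5_def put5_def by (simp add: split_paired_all)
lemma factor6: "factor get6 put6" unfolding factor_def get6_def put6_def by (simp add: split_paired_all)
lemma factor7: "factor get7 put7" unfolding factor_def get7_def put7_def by (simp add: split_paired_all)
lemma indep12: "indep get1 put1 get2 put2" unfolding indep_def get1_def put1_def get2_def put2_def by (simp add: split_paired_all)
lemma indep13: "indep get1 put1 get3 put3" unfolding indep_def get1_def put1_def get3_def put3_def by (simp add: split_paired_all)
lemma indep14: "indep get1 put1 get4 put4" unfolding indep_def get1_def put1_def get4_def put4_def by (simp add: split_paired_all)
lemma indep15: "indep get1 put1 get5 put5" unfolding indep_def get1_def put1_def get5_def put5_def by (simp add: split_paired_all)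
lemma indep16: "indep get1 put1 get6 put6" unfolding indep_def get1_def put1_def get6_def put6_def by (simp add: split_paired_all)
lemma indep17: "indep get1 put1 get7 put7" unfolding indep_def get1_def put1_def get7_def put7_def by (simp add: split_paired_all)
lemma indep23: "indep get2 put2 get3 put3" unfolding indep_def get2_def put2_def get3_def put3_def by (simp add: split_paired_all)
lemma indep24: "indep get2 put2 get4 put4" unfolding indep_def get2_def put2_def get4_def put4_def by (simp add: split_paired_all)
lemma indep25: "indep get2 put2 get5 put5" unfolding indep_def get2_def put2_def get5_def put5_def by (simp add: split_paired_all)
lemma indep26: "indep get2 put2 get6 put6" unfolding indep_def get2_def put2_def get6_def put6_def by (simp add: split_paired_all)
lemma indep27: "indep get2 put2 get7 put7" unfolding indep_def get2_def put2_def get7_def put7_def by (simp add: split_paired_all)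
lemma indep34: "indep get3 put3 get4 put4" unfolding indep_def get3_def put3_def get4_def put4_def by (simp add: split_paired_all)
lemma indep35: "indep get3 put3 get5 put5" unfolding indep_def get3_def put3_def get5_def put5_def by (simp add: split_paired_all)
lemma indep36: "indep get3 put3 get6 put6" unfolding indep_def get3_def put3_def get6_def put6_def by (simp add: split_paired_all)
lemma indep37: "indep get3 put3 get7 put7" unfolding indep_def get3_def put3_def get7_def put7_def by (simp add: split_paired_all)
lemma indep45: "indep get4 put4 get5 put5" unfolding indep_def get4_def put4_def get5_def put5_def by (simp add: split_paired_all)
lemma indep46: "indep get4 put4 get6 put6" unfolding indep_def get4_def put4_def get6_def put6_def by (simp add: split_paired_all)
lemma indep47: "indep get4 put4 get7 put7" unfolding indep_def get4_def put4_def get7_def put7_def by (simp add: split_paired_all)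
lemma indep56: "indep get5 put5 get6 put6" unfolding indep_def get5_def put5_def get6_def put6_def by (simp add: split_paired_all)
lemma indep57: "indep get5 put5 get7 put7" unfolding indep_def get5_def put5_def get7_def put7_def by (simp add: split_paired_all)
lemma indep67: "indep get6 put6 get7 put7" unfolding indep_def get6_def put6_def get7_def put7_def by (simp add: split_paired_all)
lemmas NRM = lift_comm[OF indep12] lift_comm[OF indep13] lift_comm[OF indep14] lift_comm[OF indep15] lift_comm[OF indep16] lift_comm[OF indep17] lift_comm[OF indep23] lift_comm[OF indep24] lift_comm[OF indep25] lift_comm[OF indep26] lift_comm[OF indep27] lift_comm[OF indep34] lift_comm[OF indep35] lift_comm[OF indep36] lift_comm[OF indep37] lift_comm[OF indep45] lift_comm[OF indep46] lift_comm[OF indep47] lift_comm[OF indep56] lift_comm[OF indep57] lift_comm[OF indep67] lift_merge[OF factor1] lift_mid[OF factor1] lift_merge[OF factor2] lift_mid[OF factor2] lift_merge[OF factor3] lift_mid[OF factor3] lift_merge[OF factor4] lift_mid[OF factor4] lift_merge[OF factor5] lift_mid[OF factor5] lift_merge[OF factor6] lift_mid[OF factor6] lift_merge[OF factor7] lift_mid[OF factor7]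
lemma sq_part:
  fixes psi :: "'a1::finite \<times> 'a2::finite \<times> 'a3::finite \<times> 'a4::finite \<times> 'a5::finite
                  \<times> 'a6::finite \<times> 'a7::finite \<times> 'e::finite \<Rightarrow> complex"
    and X1 :: "'a1 cmat" and X2 :: "'a2 cmat" and X3 :: "'a3 cmat"
    and X4 :: "'a4 cmat" and X5 :: "'a5 cmat" and X6 :: "'a6 cmat"
    and X7 :: "'a7 cmat"
  assumes h: "hermitian X2" "hermitian X3" "hermitian X5" "hermitian X7"
    and S1: "lift get4 put4 (X4) (lift get5 put5 (X5) (lift get6 put6 (X6) (lift get7 put7 (X7) (psi)))) = psi"
    and S2: "lift get2 put2 (X2) (lift get3 put3 (X3) (lift get6 put6 (X6) (lift get7 put7 (X7) (psi)))) = psi"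
    and S3: "lift get1 put1 (X1) (lift get3 put3 (X3) (lift get5 put5 (X5) (lift get7 put7 (X7) (psi)))) = psi"
    and S4: "lift get1 put1 (X1) (lift get2 put2 (X2) (lift get5 put5 (X5) (lift get6 put6 (X6) (psi)))) = psi"
    and sq: "mmult X1 X1 = mid" "mmult X4 X4 = mid" "mmult X6 X6 = mid"
  shows "lift get1 put1 (X1) (lift get1 put1 (X1) (psi)) = psi \<and> lift get2 put2 (X2) (lift get2 put2 (X2) (psi)) = psi \<and> lift get3 put3 (X3) (lift get3 put3 (X3) (psi)) = psi \<and> lift get4 put4 (X4) (lift get4 put4 (X4) (psi)) = psi \<and> lift get5 put5 (X5) (lift get5 put5 (X5) (psi)) = psi \<and> lift get6 put6 (X6) (lift get6 put6 (X6) (psi)) = psi \<and> lift get7 put7 (X7) (lift get7 put7 (X7) (psi)) = psi"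
proof -
  have "lift get4 put4 (X4) (lift get5 put5 (X5) (lift get6 put6 (X6) (lift get7 put7 (X7) (lift get4 put4 (X4) (lift get5 put5 (X5) (lift get6 put6 (X6) (lift get7 put7 (X7) (psi)))))))) = psi" by (simp only: S1)
  hence a: "lift get5 put5 (mmult X5 X5) (lift get7 put7 (mmult X7 X7) (psi)) = psi" by (simp only: NRM sq)
  have "lift get2 put2 (X2) (lift get3 put3 (X3) (lift get6 put6 (X6) (lift get7 put7 (X7) (lift get2 put2 (X2) (lift get3 put3 (X3) (lift get6 put6 (X6) (lift get7 put7 (X7) (psi)))))))) = psi" by (simp only: S2)
  hence b2: "lift get2 put2 (mmult X2 X2) (lift get3 put3 (mmult X3 X3) (lift get7 put7 (mmult X7 X7) (psi))) = psi" by (simp only: NRM sq)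
  have "lift get1 put1 (X1) (lift get3 put3 (X3) (lift get5 put5 (X5) (lift get7 put7 (X7) (lift get1 put1 (X1) (lift get3 put3 (X3) (lift get5 put5 (X5) (lift get7 put7 (X7) (psi)))))))) = psi" by (simp only: S3)
  hence b3: "lift get3 put3 (mmult X3 X3) (lift get5 put5 (mmult X5 X5) (lift get7 put7 (mmult X7 X7) (psi))) = psi" by (simp only: NRM sq)
  have "lift get1 put1 (X1) (lift get2 put2 (X2) (lift get5 put5 (X5) (lift get6 put6 (X6) (lift get1 put1 (X1) (lift get2 put2 (X2) (lift get5 put5 (X5) (lift get6 put6 (X6) (psi)))))))) = psi" by (simp only: S4)
  hence b4: "lift get2 put2 (mmult X2 X2) (lift get5 put5 (mmult X5 X5) (psi)) = psi" by (simp only: NRM sq)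
  have "lift get3 put3 (mmult X3 X3) (psi) = lift get3 put3 (mmult X3 X3) (lift get5 put5 (mmult X5 X5) (lift get7 put7 (mmult X7 X7) (psi)))" by (simp only: a)
  also have "\<dots> = psi" by (rule b3)
  finally have c: "lift get3 put3 (mmult X3 X3) (psi) = psi" .
  have "lift get2 put2 (mmult X2 X2) (lift get7 put7 (mmult X7 X7) (psi)) = lift get2 put2 (mmult X2 X2) (lift get7 put7 (mmult X7 X7) (lift get3 put3 (mmult X3 X3) (psi)))" by (simp only: c)
  also have "\<dots> = lift get2 put2 (mmult X2 X2) (lift get3 put3 (mmult X3 X3) (lift get7 put7 (mmult X7 X7) (psi)))" by (simp only: NRM)
  also have "\<dots> = psi" by (rule b2)
  finally have d: "lift get2 put2 (mmult X2 X2) (lift get7 put7 (mmult X7 X7) (psi)) = psi" .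
  have "lift get2 put2 (mmult (mmult X2 X2) (mmult X2 X2)) (psi) = lift get2 put2 (mmult X2 X2) (lift get5 put5 (mmult X5 X5) (lift get2 put2 (mmult X2 X2) (lift get7 put7 (mmult X7 X7) (psi))))" by (simp only: NRM a)
  also have "\<dots> = lift get2 put2 (mmult X2 X2) (lift get5 put5 (mmult X5 X5) (psi))" by (simp only: d)
  also have "\<dots> = psi" by (rule b4)
  finally have e2: "lift get2 put2 (mmult X2 X2) (psi) = psi" by (rule pos_lemma[OF factor2 h(1)])
  have "lift get7 put7 (mmult X7 X7) (psi) = lift get7 put7 (mmult X7 X7) (lift get2 put2 (mmult X2 X2) (psi))" by (simp only: e2)
  also have "\<dots> = lift get2 put2 (mmult X2 X2) (lift get7 put7 (mmult X7 X7) (psi))" by (simp only: NRM)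
  also have "\<dots> = psi" by (rule d)
  finally have f7: "lift get7 put7 (mmult X7 X7) (psi) = psi" .
  have "lift get5 put5 (mmult X5 X5) (psi) = lift get5 put5 (mmult X5 X5) (lift get2 put2 (mmult X2 X2) (psi))" by (simp only: e2)
  also have "\<dots> = lift get2 put2 (mmult X2 X2) (lift get5 put5 (mmult X5 X5) (psi))" by (simp only: NRM)
  also have "\<dots> = psi" by (rule b4)
  finally have f5: "lift get5 put5 (mmult X5 X5) (psi) = psi" .
  show ?thesis by (simp only: NRM sq c e2 f5 f7 simp_thms)
qed

theorem mainTheorem5:
  fixes psi :: "'a1::finite \<times> 'a2::finite \<times> 'a3::finite \<times> 'a4::finite \<times> 'a5::finite
                  \<times> 'a6::finite \<times> 'a7::finite \<times> 'e::finite \<Rightarrow> complex"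
    and X1 Z1 :: "'a1 cmat" and X2 Z2 :: "'a2 cmat" and X3 Z3 :: "'a3 cmat"
    and X4 Z4 :: "'a4 cmat" and X5 Z5 :: "'a5 cmat" and X6 Z6 :: "'a6 cmat"
    and X7 Z7 :: "'a7 cmat"
  assumes herm: "hermitian X1" "hermitian Z1" "hermitian X2" "hermitian Z2"
                "hermitian X3" "hermitian Z3" "hermitian X4" "hermitian Z4"
                "hermitian X5" "hermitian Z5" "hermitian X6" "hermitian Z6"
                "hermitian X7" "hermitian Z7"
    and anti: "anticommute X2 Z2" "anticommute X3 Z3" "anticommute X5 Z5" "anticommute X7 Z7"
    and S1: "lift get4 put4 X4 (lift get5 put5 X5 (lift get6 put6 X6 (lift get7 put7 X7 psi))) = psi"
    and S2: "lift get2 put2 X2 (lift get3 put3 X3 (lift get6 put6 X6 (lift get7 put7 X7 psi))) = psi"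
    and S3: "lift get1 put1 X1 (lift get3 put3 X3 (lift get5 put5 X5 (lift get7 put7 X7 psi))) = psi"
    and S4: "lift get1 put1 X1 (lift get2 put2 X2 (lift get5 put5 X5 (lift get6 put6 X6 psi))) = psi"
    and S5: "lift get4 put4 Z4 (lift get5 put5 Z5 (lift get6 put6 Z6 (lift get7 put7 Z7 psi))) = psi"
    and S6: "lift get2 put2 Z2 (lift get3 put3 Z3 (lift get6 put6 Z6 (lift get7 put7 Z7 psi))) = psi"
    and S7: "lift get1 put1 Z1 (lift get3 put3 Z3 (lift get5 put5 Z5 (lift get7 put7 Z7 psi))) = psi"
    and S8: "lift get1 put1 Z1 (lift get2 put2 Z2 (lift get5 put5 Z5 (lift get6 put6 Z6 psi))) = psi"
    and sq: "mmult X1 X1 = mid" "mmult Z1 Z1 = mid" "mmult X4 X4 = mid" "mmult Z4 Z4 = mid"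
            "mmult X6 X6 = mid" "mmult Z6 Z6 = mid"
  shows "concl_at get1 put1 X1 Z1 psi \<and> concl_at get2 put2 X2 Z2 psi \<and>
         concl_at get3 put3 X3 Z3 psi \<and> concl_at get4 put4 X4 Z4 psi \<and>
         concl_at get5 put5 X5 Z5 psi \<and> concl_at get6 put6 X6 Z6 psi \<and>
         concl_at get7 put7 X7 Z7 psi"
  
proof -
  note sqX = sq_part[OF herm(3) herm(5) herm(9) herm(13) S1 S2 S3 S4 sq(1) sq(3) sq(5)]
  note sqZ = sq_part[OF herm(4) herm(6) herm(10) herm(14) S5 S6 S7 S8 sq(2) sq(4) sq(6)]
  have a2: "mmult X2 Z2 = (\<lambda>i j. - mmult Z2 X2 i j)" using anti(1) unfolding anticommute_def by (auto simp: fun_eq_iff eq_neg_iff_add_eq_0)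
  have z2: "(\<lambda>i j. mmult X2 Z2 i j + mmult Z2 X2 i j) = (\<lambda>i j. 0)" using anti(1) unfolding anticommute_def by (simp add: split_paired_all)
  have c2: "(\<lambda>i. lift get2 put2 (X2) (lift get2 put2 (Z2) (psi)) i + lift get2 put2 (Z2) (lift get2 put2 (X2) (psi)) i) = (\<lambda>i. 0)"
    by (simp only: NRM lift_add_mat z2 lift_zero_mat)
  have a3: "mmult X3 Z3 = (\<lambda>i j. - mmult Z3 X3 i j)" using anti(2) unfolding anticommute_def by (auto simp: fun_eq_iff eq_neg_iff_add_eq_0)
  have z3: "(\<lambda>i j. mmult X3 Z3 i j + mmult Z3 X3 i j) = (\<lambda>i j. 0)" using anti(2) unfolding anticommute_def by (simp add: split_paired_all)
  have c3: "(\<lambda>i. lift get3 put3 (X3) (lift get3 put3 (Z3) (psi)) i + lift get3 put3 (Z3) (lift get3 put3 (X3) (psi)) i) = (\<lambda>i. 0)"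
    by (simp only: NRM lift_add_mat z3 lift_zero_mat)
  have a5: "mmult X5 Z5 = (\<lambda>i j. - mmult Z5 X5 i j)" using anti(3) unfolding anticommute_def by (auto simp: fun_eq_iff eq_neg_iff_add_eq_0)
  have z5: "(\<lambda>i j. mmult X5 Z5 i j + mmult Z5 X5 i j) = (\<lambda>i j. 0)" using anti(3) unfolding anticommute_def by (simp add: split_paired_all)
  have c5: "(\<lambda>i. lift get5 put5 (X5) (lift get5 put5 (Z5) (psi)) i + lift get5 put5 (Z5) (lift get5 put5 (X5) (psi)) i) = (\<lambda>i. 0)"
    by (simp only: NRM lift_add_mat z5 lift_zero_mat)
  have a7: "mmult X7 Z7 = (\<lambda>i j. - mmult Z7 X7 i j)" using anti(4) unfolding anticommute_def by (auto simp: fun_eq_iff eq_neg_iff_add_eq_0)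
  have z7: "(\<lambda>i j. mmult X7 Z7 i j + mmult Z7 X7 i j) = (\<lambda>i j. 0)" using anti(4) unfolding anticommute_def by (simp add: split_paired_all)
  have c7: "(\<lambda>i. lift get7 put7 (X7) (lift get7 put7 (Z7) (psi)) i + lift get7 put7 (Z7) (lift get7 put7 (X7) (psi)) i) = (\<lambda>i. 0)"
    by (simp only: NRM lift_add_mat z7 lift_zero_mat)
  have "lift get1 put1 (X1) (lift get1 put1 (X1) (lift get3 put3 (X3) (lift get5 put5 (X5) (lift get7 put7 (X7) (psi))))) = lift get1 put1 (X1) (psi)" by (simp only: S3)
  hence "lift get3 put3 (X3) (lift get5 put5 (X5) (lift get7 put7 (X7) (psi))) = lift get1 put1 (X1) (psi)" by (simp only: NRM sq)
  hence x1e: "lift get1 put1 (X1) (psi) = lift get3 put3 (X3) (lift get5 put5 (X5) (lift get7 put7 (X7) (psi)))" by (rule sym)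
  have "lift get1 put1 (Z1) (lift get1 put1 (Z1) (lift get3 put3 (Z3) (lift get5 put5 (Z5) (lift get7 put7 (Z7) (psi))))) = lift get1 put1 (Z1) (psi)" by (simp only: S7)
  hence "lift get3 put3 (Z3) (lift get5 put5 (Z5) (lift get7 put7 (Z7) (psi))) = lift get1 put1 (Z1) (psi)" by (simp only: NRM sq)
  hence z1e: "lift get1 put1 (Z1) (psi) = lift get3 put3 (Z3) (lift get5 put5 (Z5) (lift get7 put7 (Z7) (psi)))" by (rule sym)
  have "lift get1 put1 (X1) (lift get1 put1 (Z1) (psi)) = lift get1 put1 (X1) (lift get3 put3 (Z3) (lift get5 put5 (Z5) (lift get7 put7 (Z7) (psi))))" by (simp only: z1e)
  also have "\<dots> = lift get3 put3 (Z3) (lift get5 put5 (Z5) (lift get7 put7 (Z7) (lift get1 put1 (X1) (psi))))" by (simp only: NRM)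
  also have "\<dots> = lift get3 put3 (Z3) (lift get5 put5 (Z5) (lift get7 put7 (Z7) (lift get3 put3 (X3) (lift get5 put5 (X5) (lift get7 put7 (X7) (psi))))))" by (simp only: x1e)
  also have "\<dots> = lift get3 put3 (mmult Z3 X3) (lift get5 put5 (mmult Z5 X5) (lift get7 put7 (mmult Z7 X7) (psi)))" by (simp only: NRM)
  finally have t1: "lift get1 put1 (X1) (lift get1 put1 (Z1) (psi)) = lift get3 put3 (mmult Z3 X3) (lift get5 put5 (mmult Z5 X5) (lift get7 put7 (mmult Z7 X7) (psi)))" .
  have "lift get1 put1 (Z1) (lift get1 put1 (X1) (psi)) = lift get1 put1 (Z1) (lift get3 put3 (X3) (lift get5 put5 (X5) (lift get7 put7 (X7) (psi))))" by (simp only: x1e)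
  also have "\<dots> = lift get3 put3 (X3) (lift get5 put5 (X5) (lift get7 put7 (X7) (lift get1 put1 (Z1) (psi))))" by (simp only: NRM)
  also have "\<dots> = lift get3 put3 (X3) (lift get5 put5 (X5) (lift get7 put7 (X7) (lift get3 put3 (Z3) (lift get5 put5 (Z5) (lift get7 put7 (Z7) (psi))))))" by (simp only: z1e)
  also have "\<dots> = lift get3 put3 (mmult X3 Z3) (lift get5 put5 (mmult X5 Z5) (lift get7 put7 (mmult X7 Z7) (psi)))" by (simp only: NRM)
  finally have u1: "lift get1 put1 (Z1) (lift get1 put1 (X1) (psi)) = lift get3 put3 (mmult X3 Z3) (lift get5 put5 (mmult X5 Z5) (lift get7 put7 (mmult X7 Z7) (psi)))" .
  have c1: "(\<lambda>i. lift get1 put1 (X1) (lift get1 put1 (Z1) (psi)) i + lift get1 put1 (Z1) (lift get1 put1 (X1) (psi)) i) = (\<lambda>i. 0)"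
    by (simp add: t1 u1 a3 a5 a7 lift_neg_mat lift_neg_vec)
  have "lift get6 put6 (X6) (lift get2 put2 (X2) (lift get3 put3 (X3) (lift get6 put6 (X6) (lift get7 put7 (X7) (psi))))) = lift get6 put6 (X6) (psi)" by (simp only: S2)
  hence "lift get2 put2 (X2) (lift get3 put3 (X3) (lift get7 put7 (X7) (psi))) = lift get6 put6 (X6) (psi)" by (simp only: NRM sq)
  hence x6e: "lift get6 put6 (X6) (psi) = lift get2 put2 (X2) (lift get3 put3 (X3) (lift get7 put7 (X7) (psi)))" by (rule sym)
  have "lift get6 put6 (Z6) (lift get2 put2 (Z2) (lift get3 put3 (Z3) (lift get6 put6 (Z6) (lift get7 put7 (Z7) (psi))))) = lift get6 put6 (Z6) (psi)" by (simp only: S6)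
  hence "lift get2 put2 (Z2) (lift get3 put3 (Z3) (lift get7 put7 (Z7) (psi))) = lift get6 put6 (Z6) (psi)" by (simp only: NRM sq)
  hence z6e: "lift get6 put6 (Z6) (psi) = lift get2 put2 (Z2) (lift get3 put3 (Z3) (lift get7 put7 (Z7) (psi)))" by (rule sym)
  have "lift get6 put6 (X6) (lift get6 put6 (Z6) (psi)) = lift get6 put6 (X6) (lift get2 put2 (Z2) (lift get3 put3 (Z3) (lift get7 put7 (Z7) (psi))))" by (simp only: z6e)
  also have "\<dots> = lift get2 put2 (Z2) (lift get3 put3 (Z3) (lift get7 put7 (Z7) (lift get6 put6 (X6) (psi))))" by (simp only: NRM)
  also have "\<dots> = lift get2 put2 (Z2) (lift get3 put3 (Z3) (lift get7 put7 (Z7) (lift get2 put2 (X2) (lift get3 put3 (X3) (lift get7 put7 (X7) (psi))))))" by (simp only: x6e)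
  also have "\<dots> = lift get2 put2 (mmult Z2 X2) (lift get3 put3 (mmult Z3 X3) (lift get7 put7 (mmult Z7 X7) (psi)))" by (simp only: NRM)
  finally have t6: "lift get6 put6 (X6) (lift get6 put6 (Z6) (psi)) = lift get2 put2 (mmult Z2 X2) (lift get3 put3 (mmult Z3 X3) (lift get7 put7 (mmult Z7 X7) (psi)))" .
  have "lift get6 put6 (Z6) (lift get6 put6 (X6) (psi)) = lift get6 put6 (Z6) (lift get2 put2 (X2) (lift get3 put3 (X3) (lift get7 put7 (X7) (psi))))" by (simp only: x6e)
  also have "\<dots> = lift get2 put2 (X2) (lift get3 put3 (X3) (lift get7 put7 (X7) (lift get6 put6 (Z6) (psi))))" by (simp only: NRM)
  also have "\<dots> = lift get2 put2 (X2) (lift get3 put3 (X3) (lift get7 put7 (X7) (lift get2 put2 (Z2) (lift get3 put3 (Z3) (lift get7 put7 (Z7) (psi))))))" by (simp only: z6e)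
  also have "\<dots> = lift get2 put2 (mmult X2 Z2) (lift get3 put3 (mmult X3 Z3) (lift get7 put7 (mmult X7 Z7) (psi)))" by (simp only: NRM)
  finally have u6: "lift get6 put6 (Z6) (lift get6 put6 (X6) (psi)) = lift get2 put2 (mmult X2 Z2) (lift get3 put3 (mmult X3 Z3) (lift get7 put7 (mmult X7 Z7) (psi)))" .
  have c6: "(\<lambda>i. lift get6 put6 (X6) (lift get6 put6 (Z6) (psi)) i + lift get6 put6 (Z6) (lift get6 put6 (X6) (psi)) i) = (\<lambda>i. 0)"
    by (simp add: t6 u6 a2 a3 a7 lift_neg_mat lift_neg_vec)
  have "lift get4 put4 (X4) (lift get4 put4 (X4) (lift get5 put5 (X5) (lift get6 put6 (X6) (lift get7 put7 (X7) (psi))))) = lift get4 put4 (X4) (psi)" by (simp only: S1)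
  hence "lift get5 put5 (X5) (lift get6 put6 (X6) (lift get7 put7 (X7) (psi))) = lift get4 put4 (X4) (psi)" by (simp only: NRM sq)
  hence x4e: "lift get4 put4 (X4) (psi) = lift get5 put5 (X5) (lift get6 put6 (X6) (lift get7 put7 (X7) (psi)))" by (rule sym)
  have "lift get4 put4 (Z4) (lift get4 put4 (Z4) (lift get5 put5 (Z5) (lift get6 put6 (Z6) (lift get7 put7 (Z7) (psi))))) = lift get4 put4 (Z4) (psi)" by (simp only: S5)
  hence "lift get5 put5 (Z5) (lift get6 put6 (Z6) (lift get7 put7 (Z7) (psi))) = lift get4 put4 (Z4) (psi)" by (simp only: NRM sq)
  hence z4e: "lift get4 put4 (Z4) (psi) = lift get5 put5 (Z5) (lift get6 put6 (Z6) (lift get7 put7 (Z7) (psi)))" by (rule sym)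
  have "lift get4 put4 (X4) (lift get4 put4 (Z4) (psi)) = lift get4 put4 (X4) (lift get5 put5 (Z5) (lift get6 put6 (Z6) (lift get7 put7 (Z7) (psi))))" by (simp only: z4e)
  also have "\<dots> = lift get5 put5 (Z5) (lift get6 put6 (Z6) (lift get7 put7 (Z7) (lift get4 put4 (X4) (psi))))" by (simp only: NRM)
  also have "\<dots> = lift get5 put5 (Z5) (lift get6 put6 (Z6) (lift get7 put7 (Z7) (lift get5 put5 (X5) (lift get6 put6 (X6) (lift get7 put7 (X7) (psi))))))" by (simp only: x4e)
  also have "\<dots> = lift get5 put5 (mmult Z5 X5) (lift get6 put6 (mmult Z6 X6) (lift get7 put7 (mmult Z7 X7) (psi)))" by (simp only: NRM)
  finally have t4: "lift get4 put4 (X4) (lift get4 put4 (Z4) (psi)) = lift get5 put5 (mmult Z5 X5) (lift get6 put6 (mmult Z6 X6) (lift get7 put7 (mmult Z7 X7) (psi)))" .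
  have "lift get4 put4 (Z4) (lift get4 put4 (X4) (psi)) = lift get4 put4 (Z4) (lift get5 put5 (X5) (lift get6 put6 (X6) (lift get7 put7 (X7) (psi))))" by (simp only: x4e)
  also have "\<dots> = lift get5 put5 (X5) (lift get6 put6 (X6) (lift get7 put7 (X7) (lift get4 put4 (Z4) (psi))))" by (simp only: NRM)
  also have "\<dots> = lift get5 put5 (X5) (lift get6 put6 (X6) (lift get7 put7 (X7) (lift get5 put5 (Z5) (lift get6 put6 (Z6) (lift get7 put7 (Z7) (psi))))))" by (simp only: z4e)
  also have "\<dots> = lift get5 put5 (mmult X5 Z5) (lift get6 put6 (mmult X6 Z6) (lift get7 put7 (mmult X7 Z7) (psi)))" by (simp only: NRM)
  finally have u4: "lift get4 put4 (Z4) (lift get4 put4 (X4) (psi)) = lift get5 put5 (mmult X5 Z5) (lift get6 put6 (mmult X6 Z6) (lift get7 put7 (mmult X7 Z7) (psi)))" .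
  have m6: "(\<lambda>i. lift get6 put6 (mmult Z6 X6) (psi) i + lift get6 put6 (mmult X6 Z6) (psi) i) = (\<lambda>i. 0)"
    using c6 by (simp only: NRM add.commute)
  have t4b: "lift get4 put4 (X4) (lift get4 put4 (Z4) (psi)) = lift get5 put5 (mmult Z5 X5) (lift get7 put7 (mmult Z7 X7) (lift get6 put6 (mmult Z6 X6) (psi)))" unfolding t4 by (simp only: NRM)
  have u4b: "lift get4 put4 (Z4) (lift get4 put4 (X4) (psi)) = lift get5 put5 (mmult Z5 X5) (lift get7 put7 (mmult Z7 X7) (lift get6 put6 (mmult X6 Z6) (psi)))" unfolding u4 by (simp add: NRM a5 a7 lift_neg_mat lift_neg_vec)
  have "lift get5 put5 (mmult Z5 X5) (lift get7 put7 (mmult Z7 X7) (\<lambda>i. lift get6 put6 (mmult Z6 X6) (psi) i + lift get6 put6 (mmult X6 Z6) (psi) i)) = (\<lambda>i. lift get5 put5 (mmult Z5 X5) (lift get7 put7 (mmult Z7 X7) (lift get6 put6 (mmult Z6 X6) (psi))) i + lift get5 put5 (mmult Z5 X5) (lift get7 put7 (mmult Z7 X7) (lift get6 put6 (mmult X6 Z6) (psi))) i)" by (simp only: lift_add_vec)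
  hence c4: "(\<lambda>i. lift get4 put4 (X4) (lift get4 put4 (Z4) (psi)) i + lift get4 put4 (Z4) (lift get4 put4 (X4) (psi)) i) = (\<lambda>i. 0)"
    unfolding t4b u4b m6 lift_zero_vec by (rule sym)
  show ?thesis unfolding concl_at_def using sqX sqZ c1 c2 c3 c4 c5 c6 c7 by blast
qed

end
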